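(* Let $p$ be a positive integer and $n>0$ an integer such that $\mathcal{S}_{p,n}:=p^2 16^n+1$ is prime. Let $E/\mathbb{F}_{\mathcal{S}_{p,n}}$ be the elliptic curve $y^2=x^3-x$. Then $\#E(\mathbb{F}_{\mathcal{S}_{p,n}})=p^2 16^n$. *)

theory Defs
  imports "HOL-Computational_Algebra.Primes"
begin

definition wpoints_affine :: "int \<Rightarrow> int \<Rightarrow> int \<Rightarrow> (int \<times> int) set" where
  "wpoints_affine q a b =
     {(x, y). x \<in> {0..<q} \<and> y \<in> {0..<q} \<and> y ^ 2 mod q = (x ^ 3 + a * x + b) mod q}"

text \<open>Number of F_q-rational points: affine points plus the point at infinity.\<close>
definition wcard :: "int \<Rightarrow> int \<Rightarrow> int \<Rightarrow> nat" where
  "wcard q a b = card (wpoints_affine q a b) + 1"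

end

theory Submission
  imports Defs "HOL-Number_Theory.Number_Theory"
begin


locale ell =
  fixes q M :: int
  assumes pr: "prime q" and qdef: "q = M^2 + 1" and Mpos: "M > 0" and M4: "4 dvd M"
begin

definition chi :: "int \<Rightarrow> int" where "chi x = Legendre x q"

lemma M_ge: "M \<ge> 4" using M4 Mpos by (auto elim!: dvdE)

lemma q_gt: "q > 2"
proof -
  have "M * M \<ge> 4 * 4" using M_ge by (intro mult_mono) auto
  then show ?thesis using qdef by (simp add: power2_eq_square)
qed

lemma q_odd: "odd q" using M4 qdef by (auto elim!: dvdE simp: power2_eq_square)

lemma q16: "q mod 16 = 1"
proof -
  obtain k where "M = 4 * k" using M4 by (auto elim!: dvdE)
  then have "q = 1 + 16 * (k * k)" using qdef by (simp add: power2_eq_square algebra_simps)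
  then show ?thesis by simp
qed

lemma cong_dvd: "[a = b] (mod q) \<longleftrightarrow> q dvd (a - b)"
  by (simp add: cong_iff_dvd_diff)

lemma chi_cong: assumes "[a = b] (mod q)" shows "chi a = chi b"
proof -
  have 1: "[a = 0] (mod q) \<longleftrightarrow> [b = 0] (mod q)" using assms cong_sym cong_trans by meson
  have 2: "(\<exists>y. [y^2 = a] (mod q)) \<longleftrightarrow> (\<exists>y. [y^2 = b] (mod q))"
    using assms cong_sym cong_trans by meson
  show ?thesis unfolding chi_def Legendre_def QuadRes_def using 1 2 by presburger
qed

lemma chi_mod: "chi (a mod q) = chi a"
  by (rule chi_cong) (simp add: cong_def)

lemma chi_zero_iff: "chi a = 0 \<longleftrightarrow> q dvd a"
  unfolding chi_def Legendre_def cong_0_iff by simp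

lemma chi_vals: "chi a \<in> {-1, 0, 1}"
  unfolding chi_def Legendre_def by simp

lemma chi_euler: "[chi a = a ^ nat ((q - 1) div 2)] (mod q)"
proof -
  have q: "q = int (nat q)" using q_gt by simp
  have "prime (nat q)" using pr q by (metis prime_nat_int_transfer)
  moreover have "2 < nat q" using q_gt by simp
  ultimately have "[Legendre a (int (nat q)) = a ^ ((nat q - 1) div 2)] (mod int (nat q))"
    by (rule euler_criterion)
  moreover have "(nat q - 1) div 2 = nat ((q - 1) div 2)" using q_gt by (simp add: nat_div_distrib)
  ultimately show ?thesis using q unfolding chi_def by simp
qed

lemma small_dvd: "q dvd d \<Longrightarrow> \<bar>d\<bar> < q \<Longrightarrow> d = 0"
  using dvd_imp_le_int[of d q] q_gt by fastforce

lemma vals_cong_eq: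
  assumes "a \<in> {-1,0,1::int}" "b \<in> {-1,0,1}" "[a = b] (mod q)"
  shows "a = b"
proof -
  have "q dvd (a - b)" using assms(3) by (simp add: cong_dvd)
  moreover have "\<bar>a - b\<bar> \<le> 2" using assms(1,2) by fastforce
  ultimately show ?thesis using small_dvd[of "a - b"] q_gt by simp
qed

lemma chi_mult: "chi (a * b) = chi a * chi b"
proof (rule vals_cong_eq)
  show "chi (a*b) \<in> {-1,0,1}" by (rule chi_vals)
  show "chi a * chi b \<in> {-1,0,1}" using chi_vals[of a] chi_vals[of b] by auto
  have "[chi (a*b) = (a*b) ^ nat ((q - 1) div 2)] (mod q)" by (rule chi_euler)
  moreover have "[chi a * chi b = a ^ nat ((q - 1) div 2) * b ^ nat ((q - 1) div 2)] (mod q)"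
    by (intro cong_mult chi_euler)
  ultimately show "[chi (a*b) = chi a * chi b] (mod q)"
    by (metis cong_sym cong_trans power_mult_distrib)
qed

lemma chi_sq: "\<not> q dvd t \<Longrightarrow> chi (t^2) = 1"
  using chi_vals[of t] chi_zero_iff[of t] by (auto simp: power2_eq_square chi_mult)

lemma chi_one: "chi 1 = 1" using chi_sq[of 1] q_gt by (simp add: zdvd_not_zless)

lemma chi_neg1: "chi (-1) = 1"
proof -
  have "[-1 = M^2] (mod q)" unfolding cong_dvd by (rule dvdI[of _ _ "-1"]) (simp add: qdef)
  moreover have "\<not> q dvd M"
  proof
    assume "q dvd M"
    then have "q \<le> M" using Mpos by (simp add: zdvd_imp_le)
    moreover have "M < q" using qdef M_ge by (simp add: power2_eq_square)
    ultimately show False by simp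
  qed
  ultimately show ?thesis using chi_cong chi_sq by metis
qed

lemma chi_sqr: "chi a ^ 2 = (if q dvd a then 0 else 1)"
  using chi_vals[of a] chi_zero_iff[of a] by auto

end

context ell begin

lemma coprime_of: "\<not> q dvd s \<Longrightarrow> coprime s q"
  using pr by (metis prime_imp_coprime coprime_commute)

lemma mod_range: "x mod q \<in> {0..<q}" using q_gt by simp

lemma reindex:
  assumes "coprime s q" "\<And>x. F (x mod q) = F x"
  shows "(\<Sum>x\<in>{0..<q}. F (s*x + d)) = (\<Sum>x\<in>{0..<q}. F x)"
proof -
  let ?g = "\<lambda>x. (s*x + d) mod q"
  have inj: "inj_on ?g {0..<q}"
  proof (rule inj_onI)
    fix x y assume xy: "x \<in> {0..<q}" "y \<in> {0..<q}" "?g x = ?g y"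
    then have "[s*x + d = s*y + d] (mod q)" by (simp add: cong_def)
    then have "[s*x = s*y] (mod q)" by (simp add: cong_add_rcancel)
    then have "[x = y] (mod q)" using assms(1) cong_mult_lcancel by blast
    then show "x = y" using xy by (simp add: cong_def)
  qed
  have img: "?g ` {0..<q} = {0..<q}"
    by (rule endo_inj_surj) (use inj mod_range in auto)
  have "(\<Sum>x\<in>{0..<q}. F (s*x+d)) = (\<Sum>x\<in>{0..<q}. F (?g x))" using assms(2) by simp
  also have "\<dots> = (\<Sum>y\<in>?g ` {0..<q}. F y)" using sum.reindex[OF inj, of F] by (simp add: o_def)
  also have "\<dots> = (\<Sum>x\<in>{0..<q}. F x)" using img by simp
  finally show ?thesis .
qed

lemma reindex_shift:
  assumes "\<And>x. F (x mod q) = F x"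
  shows "(\<Sum>x\<in>{0..<q}. F (x + d)) = (\<Sum>x\<in>{0..<q}. F x)"
  using reindex[of 1 F d] assms by simp

lemma sq_eq: "[x^2 = y^2] (mod q) \<longleftrightarrow> [x = y] (mod q) \<or> [x = -y] (mod q)"
proof -
  have "x^2 - y^2 = (x - y) * (x + y)" by (simp add: power2_eq_square algebra_simps)
  then show ?thesis unfolding cong_dvd using pr by (simp add: prime_dvd_mult_iff)
qed

lemma red_eq: "x \<in> {0..<q} \<Longrightarrow> y \<in> {0..<q} \<Longrightarrow> [x = y] (mod q) \<longleftrightarrow> x = y"
  by (simp add: cong_def)

lemma sqroots:
  assumes "x \<in> {1..<q}"
  shows "{y\<in>{0..<q}. [y^2 = x^2] (mod q)} = {x, q - x}"
proof -
  have negx: "[- x = q - x] (mod q)" by (simp add: cong_dvd)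
  have "y \<in> {0..<q} \<Longrightarrow> [y^2 = x^2] (mod q) \<longleftrightarrow> y = x \<or> y = q - x" for y
  proof -
    assume y: "y \<in> {0..<q}"
    have "[y = -x] (mod q) \<longleftrightarrow> [y = q - x] (mod q)" using negx cong_trans cong_sym by meson
    then show ?thesis using y assms by (simp add: sq_eq red_eq)
  qed
  moreover have "q - x \<in> {0..<q}" "x \<in> {0..<q}" using assms by auto
  ultimately show ?thesis by auto
qed

lemma card_pm: "x \<in> {1..<q} \<Longrightarrow> card {x, q - x} = 2"
  using q_odd by (auto simp: card_insert_if)

lemma roots: "int (card {y\<in>{0..<q}. [y^2 = a] (mod q)}) = 1 + chi a"
proof (cases "q dvd a")
  case True
  have "{y\<in>{0..<q}. [y^2 = a] (mod q)} = {0}"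
  proof -
    have "[y^2 = a] (mod q) \<longleftrightarrow> q dvd y" for y
    proof -
      have "[y^2 = a] (mod q) \<longleftrightarrow> q dvd y^2" using True
        by (metis cong_dvd cong_0_iff cong_sym cong_trans)
      also have "\<dots> \<longleftrightarrow> q dvd y" using pr by (simp add: prime_dvd_power_iff)
      finally show ?thesis .
    qed
    moreover have "y \<in> {0..<q} \<Longrightarrow> q dvd y \<Longrightarrow> y = 0" for y
      using zdvd_imp_le[of q y] by fastforce
    ultimately show ?thesis using q_gt by auto
  qed
  then show ?thesis using True chi_zero_iff by simp
next
  case False
  show ?thesis
  proof (cases "QuadRes q a")
    case True
    then obtain y0 where y0: "[y0^2 = a] (mod q)" unfolding QuadRes_def by blast
    define x where "x = y0 mod q"
    have "[x = y0] (mod q)" by (simp add: x_def cong_def)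
    then have xa: "[x^2 = a] (mod q)" using y0 cong_pow cong_trans by blast
    have "x \<noteq> 0"
    proof
      assume "x = 0"
      then have "[0 = a] (mod q)" using xa by simp
      then show False using False by (simp add: cong_dvd)
    qed
    then have xr: "x \<in> {1..<q}" using mod_range[of y0] x_def by auto
    have "{y\<in>{0..<q}. [y^2 = a] (mod q)} = {y\<in>{0..<q}. [y^2 = x^2] (mod q)}"
      using xa cong_trans cong_sym by meson
    also have "\<dots> = {x, q - x}" by (rule sqroots[OF xr])
    finally have "card {y\<in>{0..<q}. [y^2 = a] (mod q)} = 2" using card_pm[OF xr] by simp
    moreover have "chi a = 1" unfolding chi_def Legendre_def using True False
      by (simp add: cong_0_iff)
    ultimately show ?thesis by simp
  next
    case nq: False
    have "{y\<in>{0..<q}. [y^2 = a] (mod q)} = {}" using nq unfolding QuadRes_def by blast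
    then have "card {y\<in>{0..<q}. [y^2 = a] (mod q)} = 0" by (metis card.empty)
    moreover have "chi a = -1" unfolding chi_def Legendre_def using nq False
      by (simp add: cong_0_iff)
    ultimately show ?thesis by simp
  qed
qed

lemma chi_sum: "(\<Sum>x\<in>{0..<q}. chi x) = 0"
proof -
  let ?B = "\<lambda>a. {y\<in>{0..<q}. [y^2 = a] (mod q)}"
  have B: "?B a = {y\<in>{0..<q}. y^2 mod q = a}" if "a \<in> {0..<q}" for a
    using that by (auto simp: cong_def)
  have U: "(\<Union>a\<in>{0..<q}. ?B a) = {0..<q}"
  proof
    show "(\<Union>a\<in>{0..<q}. ?B a) \<subseteq> {0..<q}" by auto
    show "{0..<q} \<subseteq> (\<Union>a\<in>{0..<q}. ?B a)"
    proof
      fix y assume "y \<in> {0..<q}"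
      then have "y \<in> ?B (y^2 mod q)" "y^2 mod q \<in> {0..<q}" using q_gt by (auto simp: cong_def)
      then show "y \<in> (\<Union>a\<in>{0..<q}. ?B a)" by blast
    qed
  qed
  have "card (\<Union>a\<in>{0..<q}. ?B a) = (\<Sum>a\<in>{0..<q}. card (?B a))"
  proof (rule card_UN_disjoint)
    show "finite {0..<q}" by simp
    show "\<forall>i\<in>{0..<q}. finite (?B i)" by (auto intro: finite_subset[of _ "{0..<q}"])
    show "\<forall>i\<in>{0..<q}. \<forall>j\<in>{0..<q}. i \<noteq> j \<longrightarrow> ?B i \<inter> ?B j = {}"
    proof (intro ballI impI)
      fix i j assume ij: "i \<in> {0..<q}" "j \<in> {0..<q}" "i \<noteq> j"
      show "?B i \<inter> ?B j = {}"
      proof (rule ccontr)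
        assume "?B i \<inter> ?B j \<noteq> {}"
        then obtain y where "[y^2 = i] (mod q)" "[y^2 = j] (mod q)" by blast
        then have "[i = j] (mod q)" using cong_trans cong_sym by meson
        then show False using ij red_eq by blast
      qed
    qed
  qed
  then have "card {0..<q} = (\<Sum>a\<in>{0..<q}. card (?B a))" using U by simp
  then have "q = (\<Sum>a\<in>{0..<q}. int (card (?B a)))" using q_gt by (simp flip: of_nat_sum)
  also have "\<dots> = (\<Sum>a\<in>{0..<q}. 1 + chi a)" using roots by simp
  also have "\<dots> = q + (\<Sum>a\<in>{0..<q}. chi a)" using q_gt by (simp add: sum.distrib)
  finally show ?thesis by simp
qed

end

context ell begin

lemma xmod: "[x mod q = x] (mod q)" by (simp add: cong_def)

definition J :: "int \<Rightarrow> int" where "J c = (\<Sum>b\<in>{0..<q}. chi (b * (b + c)))"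

lemma chi_modc: "chi (P (x mod q)) = chi (P x)" if "\<And>y. [P (y mod q) = P y] (mod q)"
  using that chi_cong by blast

lemma J_cong: "[c = c'] (mod q) \<Longrightarrow> J c = J c'"
  unfolding J_def by (intro sum.cong refl chi_cong cong_mult cong_add cong_refl) auto

lemma J0: "J 0 = q - 1"
proof -
  have "{0..<q} = insert 0 {1..<q}" using q_gt by auto
  then have "J 0 = chi 0 + (\<Sum>b\<in>{1..<q}. chi (b * b))" unfolding J_def by simp
  also have "\<dots> = (\<Sum>b\<in>{1..<q}. 1)"
  proof -
    have "chi (b*b) = 1" if "b \<in> {1..<q}" for b
      using chi_sq[of b] that zdvd_imp_le[of q b] by (auto simp: power2_eq_square)
    then show ?thesis using chi_zero_iff[of 0] by simp
  qed
  finally show ?thesis using q_gt by simp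
qed

lemma J_scale: assumes "\<not> q dvd s" shows "J (c * s) = J c"
proof -
  let ?F = "\<lambda>b. chi (b * (b + c * s))"
  have per: "?F (x mod q) = ?F x" for x
    by (rule chi_cong) (intro cong_mult cong_add cong_diff cong_pow cong_refl xmod)
  have "(\<Sum>b\<in>{0..<q}. ?F (s*b + 0)) = (\<Sum>b\<in>{0..<q}. ?F b)"
    by (rule reindex[of s ?F, OF coprime_of[OF assms] per])
  moreover have "?F (s*b + 0) = chi (b * (b + c))" for b
  proof -
    have "?F (s*b+0) = chi (s^2 * (b * (b + c)))" by (simp add: power2_eq_square algebra_simps)
    also have "\<dots> = chi (b * (b + c))" using chi_sq[OF assms] by (simp add: chi_mult)
    finally show ?thesis .
  qed
  ultimately show ?thesis unfolding J_def by simp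
qed

lemma J_sum: "(\<Sum>t\<in>{0..<q}. J t) = 0"
proof -
  have "(\<Sum>t\<in>{0..<q}. J t) = (\<Sum>t\<in>{0..<q}. \<Sum>b\<in>{0..<q}. chi b * chi (t + b))"
    unfolding J_def by (simp add: chi_mult add.commute)
  also have "\<dots> = (\<Sum>b\<in>{0..<q}. chi b * (\<Sum>t\<in>{0..<q}. chi (t + b)))"
    by (subst sum.swap) (simp add: sum_distrib_left)
  also have "\<dots> = 0"
  proof -
    have "(\<Sum>t\<in>{0..<q}. chi (t + b)) = 0" for b
      using reindex_shift[of chi b] chi_mod chi_sum by simp
    then show ?thesis by simp
  qed
  finally show ?thesis .
qed

lemma J1: "J 1 = -1"
proof -
  have "{0..<q} = insert 0 {1..<q}" using q_gt by auto
  then have "(\<Sum>t\<in>{0..<q}. J t) = J 0 + (\<Sum>t\<in>{1..<q}. J t)" by simp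
  also have "(\<Sum>t\<in>{1..<q}. J t) = (\<Sum>t\<in>{1..<q}. J 1)"
  proof (rule sum.cong)
    fix t assume "t \<in> {1..<q}"
    then have "\<not> q dvd t" using zdvd_imp_le[of q t] by auto
    then show "J t = J 1" using J_scale[of t 1] by simp
  qed simp
  finally have "0 = (q - 1) + (q - 1) * J 1" using J_sum J0 q_gt by simp
  then have "(q - 1) * (1 + J 1) = 0" by (metis distrib_left mult.right_neutral)
  then show ?thesis using q_gt by simp
qed

lemma J_nz: "\<not> q dvd c \<Longrightarrow> J c = -1"
  using J_scale[of c 1] J1 by simp

lemma K: "(\<Sum>a\<in>{0..<q}. chi ((a + u) * (a + v))) = (if [u = v] (mod q) then q - 1 else -1)"
proof -
  let ?F = "\<lambda>b. chi (b * (b + (v - u)))"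
  have per: "?F (x mod q) = ?F x" for x
    by (rule chi_cong) (intro cong_mult cong_add cong_diff cong_pow cong_refl xmod)
  have "(\<Sum>a\<in>{0..<q}. chi ((a + u) * (a + v))) = (\<Sum>a\<in>{0..<q}. ?F (a + u))"
    by (simp add: algebra_simps)
  also have "\<dots> = J (v - u)" unfolding J_def by (rule reindex_shift[of ?F, OF per])
  finally have e: "(\<Sum>a\<in>{0..<q}. chi ((a + u) * (a + v))) = J (v - u)" .
  show ?thesis
  proof (cases "[u = v] (mod q)")
    case True
    then have "[v - u = 0] (mod q)" by (simp add: cong_dvd dvd_diff_commute)
    then show ?thesis using e J_cong J0 True by metis
  next
    case False
    then have "\<not> q dvd (v - u)" by (simp add: cong_dvd dvd_diff_commute)
    then show ?thesis using e J_nz False by simp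
  qed
qed

end

context ell begin

definition phi :: "int \<Rightarrow> int" where "phi a = (\<Sum>x\<in>{0..<q}. chi (x * (x^2 + a)))"

lemma phi_cong: "[a = a'] (mod q) \<Longrightarrow> phi a = phi a'"
  unfolding phi_def by (intro sum.cong refl chi_cong cong_mult cong_add cong_refl) auto

lemma nd_range: "t \<in> {1..<q} \<Longrightarrow> \<not> q dvd t"
  using zdvd_imp_le[of q t] by auto

lemma phi_scale: assumes "\<not> q dvd t" shows "phi (a * t^2) = chi t * phi a"
proof -
  let ?F = "\<lambda>x. chi (x * (x^2 + a * t^2))"
  have per: "?F (x mod q) = ?F x" for x
    by (rule chi_cong) (intro cong_mult cong_add cong_diff cong_pow cong_refl xmod)
  have "(\<Sum>x\<in>{0..<q}. ?F (t*x + 0)) = (\<Sum>x\<in>{0..<q}. ?F x)"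
    by (rule reindex[of t ?F, OF coprime_of[OF assms] per])
  moreover have "?F (t*x + 0) = chi t * chi (x * (x^2 + a))" for x
  proof -
    have "?F (t*x+0) = chi (t^2 * (t * (x * (x^2 + a))))" by (simp add: power2_eq_square algebra_simps)
    also have "\<dots> = chi t * chi (x * (x^2 + a))" using chi_sq[OF assms] by (simp add: chi_mult)
    finally show ?thesis .
  qed
  ultimately show ?thesis unfolding phi_def by (simp add: sum_distrib_left)
qed

lemma chi_cube: "chi (x * x^2) = chi x"
  using chi_vals[of x] by (auto simp: chi_mult power2_eq_square)

lemma phi0: "phi 0 = 0"
  unfolding phi_def using chi_sum by (simp add: chi_cube)

lemma chi_negx: "chi (q - x) = chi x"
proof -
  have "chi (q - x) = chi ((-1) * x)" by (rule chi_cong) (simp add: cong_dvd)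
  moreover have "chi (-x) = chi (-1) * chi x" using chi_mult[of "-1" x] by simp
  ultimately show ?thesis by (simp add: chi_neg1)
qed

lemma inner:
  assumes "x \<in> {0..<q}"
  shows "(\<Sum>y\<in>{0..<q}. chi x * chi y * (if [x^2 = y^2] (mod q) then q - 1 else -1))
         = (if x = 0 then 0 else 2 * q)"
proof (cases "x = 0")
  case True
  then show ?thesis using chi_zero_iff[of 0] by simp
next
  case False
  then have x1: "x \<in> {1..<q}" using assms by auto
  have "(\<Sum>y\<in>{0..<q}. chi x * chi y * (if [x^2 = y^2] (mod q) then q - 1 else -1))
      = q * (\<Sum>y\<in>{0..<q}. if [y^2 = x^2] (mod q) then chi x * chi y else 0) - chi x * (\<Sum>y\<in>{0..<q}. chi y)"
  proof -
    have "(\<Sum>y\<in>{0..<q}. chi x * chi y * (if [x^2 = y^2] (mod q) then q - 1 else -1))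
       = (\<Sum>y\<in>{0..<q}. q * (if [y^2 = x^2] (mod q) then chi x * chi y else 0) - chi x * chi y)"
      by (rule sum.cong) (auto simp: cong_sym_eq algebra_simps)
    then show ?thesis by (simp add: sum_subtractf sum_distrib_left)
  qed
  also have "(\<Sum>y\<in>{0..<q}. if [y^2 = x^2] (mod q) then chi x * chi y else 0)
      = (\<Sum>y\<in>{y\<in>{0..<q}. [y^2 = x^2] (mod q)}. chi x * chi y)"
    by (rule sum.inter_filter[symmetric]) simp
  also have "\<dots> = (\<Sum>y\<in>{x, q - x}. chi x * chi y)" using sqroots[OF x1] by simp
  also have "\<dots> = 2"
  proof -
    have "x \<noteq> q - x" using q_odd by auto
    moreover have "chi x * chi x = 1" using chi_sqr[of x] nd_range[OF x1] by (simp add: power2_eq_square)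
    ultimately show ?thesis by (simp add: chi_negx)
  qed
  finally show ?thesis using False chi_sum by simp
qed

lemma phi_sq_sum: "(\<Sum>a\<in>{0..<q}. (phi a)^2) = 2 * q * (q - 1)"
proof -
  let ?A = "{0..<q}"
  have sq: "(phi a)^2 = (\<Sum>x\<in>?A. \<Sum>y\<in>?A. chi x * chi y * chi ((a + x^2) * (a + y^2)))" for a
    unfolding phi_def power2_eq_square[of "sum _ _"] sum_product
    by (intro sum.cong refl) (simp add: chi_mult add.commute mult.commute mult.left_commute)
  have "(\<Sum>a\<in>?A. (phi a)^2) = (\<Sum>a\<in>?A. \<Sum>x\<in>?A. \<Sum>y\<in>?A. chi x * chi y * chi ((a + x^2) * (a + y^2)))"
    by (simp add: sq)
  also have "\<dots> = (\<Sum>x\<in>?A. \<Sum>a\<in>?A. \<Sum>y\<in>?A. chi x * chi y * chi ((a + x^2) * (a + y^2)))"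
    by (rule sum.swap)
  also have "\<dots> = (\<Sum>x\<in>?A. \<Sum>y\<in>?A. \<Sum>a\<in>?A. chi x * chi y * chi ((a + x^2) * (a + y^2)))"
    by (rule sum.cong[OF refl], rule sum.swap)
  also have "\<dots> = (\<Sum>x\<in>?A. \<Sum>y\<in>?A. chi x * chi y * (if [x^2 = y^2] (mod q) then q - 1 else -1))"
    by (simp add: sum_distrib_left[symmetric] K)
  also have "\<dots> = (\<Sum>x\<in>?A. if x = 0 then 0 else 2 * q)"
    by (rule sum.cong[OF refl]) (rule inner)
  also have "\<dots> = (\<Sum>x\<in>{1..<q}. 2 * q)"
  proof -
    have "?A = insert 0 {1..<q}" using q_gt by auto
    then show ?thesis by simp
  qed
  also have "\<dots> = 2 * q * (q - 1)" using q_gt by simp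
  finally show ?thesis .
qed

end

context ell begin

lemma chi1_res: "chi a = 1 \<Longrightarrow> \<exists>y. [y^2 = a] (mod q)"
  unfolding chi_def Legendre_def QuadRes_def by (auto split: if_splits)

lemma Mneg: "[M^2 = -1] (mod q)" unfolding cong_dvd by (rule dvdI[of _ _ 1]) (simp add: qdef)

lemma res_phi: assumes "chi a = 1" shows "(phi a)^2 = (phi (-1))^2"
proof -
  obtain y where y: "[y^2 = a] (mod q)" using chi1_res[OF assms] by blast
  have "\<not> q dvd a" using assms chi_zero_iff[of a] by auto
  then have ny: "\<not> q dvd y"
    using y cong_dvd_iff[OF y] by (auto simp: power2_eq_square)
  have nM: "\<not> q dvd M"
  proof
    assume "q dvd M"
    then have "q dvd M^2" by (simp add: power2_eq_square)
    then have "q dvd -1" using cong_dvd_iff[OF Mneg] by simp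
    then show False using q_gt by simp
  qed
  have "[(-1) * (M*y)^2 = a] (mod q)"
  proof -
    have "[(-1) * (M*y)^2 = (-1) * ((-1) * y^2)] (mod q)"
      unfolding power_mult_distrib by (intro cong_mult cong_refl) (simp add: Mneg)
    then show ?thesis using y by (simp add: cong_trans)
  qed
  then have "phi a = phi ((-1) * (M*y)^2)" using phi_cong cong_sym by metis
  also have "\<dots> = chi (M*y) * phi (-1)"
    by (rule phi_scale) (use pr ny nM in \<open>simp add: prime_dvd_mult_iff\<close>)
  finally have "(phi a)^2 = (chi (M*y))^2 * (phi (-1))^2" by (simp add: power_mult_distrib)
  moreover have "(chi (M*y))^2 = 1" using chi_sqr[of "M*y"] pr ny nM by (simp add: prime_dvd_mult_iff)
  ultimately show ?thesis by simp
qed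

lemma nres_phi: assumes "chi a = -1" "chi g = -1" shows "(phi a)^2 = (phi g)^2"
proof -
  have na: "\<not> q dvd a" and ng: "\<not> q dvd g" using assms chi_zero_iff[of a] chi_zero_iff[of g] by auto
  have "chi (a * g) = 1" using assms by (simp add: chi_mult)
  then obtain t where t: "[t^2 = a * g] (mod q)" using chi1_res by blast
  have nt: "\<not> q dvd t"
  proof
    assume "q dvd t"
    then have "q dvd t^2" by (simp add: power2_eq_square)
    then have "q dvd a * g" using cong_dvd_iff[OF t] by simp
    then show False using pr na ng by (simp add: prime_dvd_mult_iff)
  qed
  have "phi (a * g^2) = chi g * phi a" by (rule phi_scale[OF ng])
  then have 1: "(phi (a * g^2))^2 = (phi a)^2" using chi_sqr[of g] ng by (simp add: power_mult_distrib)
  have "[a * g^2 = g * t^2] (mod q)"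
  proof -
    have "[g * t^2 = g * (a * g)] (mod q)" by (intro cong_mult cong_refl t)
    then show ?thesis by (simp add: cong_sym_eq power2_eq_square algebra_simps)
  qed
  then have "phi (a * g^2) = phi (g * t^2)" by (rule phi_cong)
  also have "\<dots> = chi t * phi g" by (rule phi_scale[OF nt])
  finally have "(phi (a * g^2))^2 = (phi g)^2" using chi_sqr[of t] nt by (simp add: power_mult_distrib)
  then show ?thesis using 1 by simp
qed

lemma two_squares: "\<exists>T. (phi (-1))^2 + T^2 = 4 * q"
proof -
  define R where "R = {a\<in>{1..<q}. chi a = 1}"
  define N where "N = {a\<in>{1..<q}. chi a = -1}"
  have RN: "{1..<q} = R \<union> N" "R \<inter> N = {}"
    using chi_vals nd_range chi_zero_iff unfolding R_def N_def by fastforce+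
  have fin: "finite R" "finite N" unfolding R_def N_def by (auto intro: finite_subset[of _ "{1..<q}"])
  have s1: "(\<Sum>a\<in>{1..<q}. chi a) = 0"
  proof -
    have "{0..<q} = insert 0 {1..<q}" using q_gt by auto
    then show ?thesis using chi_sum chi_zero_iff[of 0] by simp
  qed
  have "(\<Sum>a\<in>{1..<q}. chi a) = (\<Sum>a\<in>R. chi a) + (\<Sum>a\<in>N. chi a)"
    using RN fin by (simp add: sum.union_disjoint)
  also have "\<dots> = int (card R) - int (card N)" unfolding R_def N_def by simp
  finally have c1: "int (card R) = int (card N)" using s1 by simp
  have "card {1..<q} = card R + card N" using RN fin by (simp add: card_Un_disjoint)
  then have c2: "int (card R) + int (card N) = q - 1" using q_gt by simp
  then have "card N > 0" using c1 q_gt by simp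
  then obtain g where g: "g \<in> N" by (metis card.empty less_irrefl ex_in_conv)
  have "(\<Sum>a\<in>{0..<q}. (phi a)^2) = (phi 0)^2 + (\<Sum>a\<in>{1..<q}. (phi a)^2)"
  proof -
    have "{0..<q} = insert 0 {1..<q}" using q_gt by auto
    then show ?thesis by simp
  qed
  also have "(\<Sum>a\<in>{1..<q}. (phi a)^2) = (\<Sum>a\<in>R. (phi a)^2) + (\<Sum>a\<in>N. (phi a)^2)"
    using RN fin by (simp add: sum.union_disjoint)
  also have "(\<Sum>a\<in>R. (phi a)^2) = int (card R) * (phi (-1))^2"
    using res_phi unfolding R_def by simp
  also have "(\<Sum>a\<in>N. (phi a)^2) = (\<Sum>a\<in>N. (phi g)^2)"
  proof (rule sum.cong[OF refl])
    fix a assume "a \<in> N"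
    then have "chi a = -1" by (simp add: N_def)
    moreover have "chi g = -1" using g by (simp add: N_def)
    ultimately show "(phi a)^2 = (phi g)^2" by (rule nres_phi)
  qed
  also have "\<dots> = int (card N) * (phi g)^2" by simp
  finally have "2 * q * (q - 1) = int (card R) * ((phi (-1))^2 + (phi g)^2)"
    using phi_sq_sum phi0 c1 by (simp add: algebra_simps)
  moreover have cR: "q - 1 = 2 * int (card R)" using c1 c2 by simp
  ultimately have "int (card R) * (4 * q) = int (card R) * ((phi (-1))^2 + (phi g)^2)"
    by (simp add: algebra_simps)
  moreover have "int (card R) \<noteq> 0" using cR q_gt by auto
  ultimately have "4 * q = (phi (-1))^2 + (phi g)^2" by simp
  then show ?thesis by metis
qed

end


lemma invol_even:
  assumes "finite A" "\<forall>x\<in>A. h x \<in> A \<and> h (h x) = x \<and> h x \<noteq> x"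
  shows "even (card A)"
  using assms
proof (induction A rule: finite_psubset_induct)
  case (psubset A)
  show ?case
  proof (cases "A = {}")
    case True
    then show ?thesis by simp
  next
    case False
    then obtain x where x: "x \<in> A" by blast
    define B where "B = A - {x, h x}"
    have hx: "h x \<in> A" "h x \<noteq> x" using psubset.prems x by auto
    have "B \<subset> A" using x unfolding B_def by auto
    moreover have "\<forall>y\<in>B. h y \<in> B \<and> h (h y) = y \<and> h y \<noteq> y"
    proof
      fix y assume y: "y \<in> B"
      then have yA: "y \<in> A" "y \<noteq> x" "y \<noteq> h x" unfolding B_def by auto
      have "h y \<noteq> x" using yA psubset.prems x by metis
      moreover have "h y \<noteq> h x" using yA psubset.prems x by metis
      ultimately show "h y \<in> B \<and> h (h y) = y \<and> h y \<noteq> y" using yA psubset.prems unfolding B_def by auto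
    qed
    ultimately have "even (card B)" using psubset.IH by blast
    moreover have "card A = card B + 2"
    proof -
      have eq: "A = insert x (insert (h x) B)" using x hx unfolding B_def by auto
      have fB: "finite B" using psubset.hyps unfolding B_def by auto
      have n1: "h x \<notin> B" "x \<notin> insert (h x) B" using hx unfolding B_def by auto
      have "card (insert x (insert (h x) B)) = Suc (Suc (card B))" using fB n1 by simp
      then show ?thesis using eq by simp
    qed
    ultimately show ?thesis by simp
  qed
qed

context ell begin

definition ff :: "int \<Rightarrow> int" where "ff x = chi (x * (x^2 + -1))"

lemma phi_ff: "phi (-1) = (\<Sum>x\<in>{0..<q}. ff x)"
  unfolding phi_def ff_def by simp

lemma ff_cong: "[x = y] (mod q) \<Longrightarrow> ff x = ff y"
  unfolding ff_def by (intro chi_cong cong_mult cong_add cong_pow cong_refl)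

lemma chi_neg: "chi (- y) = chi y"
  using chi_mult[of "-1" y] chi_neg1 by simp

lemma ff_neg: "ff (q - x) = ff x"
proof -
  have "ff (q - x) = ff (- x)" by (rule ff_cong) (simp add: cong_dvd)
  also have "\<dots> = chi (- (x * (x^2 + -1)))" unfolding ff_def by (simp add: algebra_simps)
  finally show ?thesis by (simp add: chi_neg ff_def)
qed

lemma ff_inv:
  assumes "[x * z = e] (mod q)" "e = 1 \<or> e = -1" "\<not> q dvd x"
  shows "ff z = ff x"
proof -
  have id: "x^2 * x^2 * (z * (z^2 + -1)) = x * (x*z)^3 - x^3 * (x*z)"
    by (simp add: power2_eq_square power3_eq_cube algebra_simps)
  have "[x * (x*z)^3 - x^3 * (x*z) = x * e^3 - x^3 * e] (mod q)"
    by (intro cong_diff cong_mult cong_pow cong_refl assms(1))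
  moreover have "x * e^3 - x^3 * e = (- e) * (x * (x^2 + -1))"
    using assms(2) by (auto simp: power2_eq_square power3_eq_cube algebra_simps)
  ultimately have "[x^2 * x^2 * (z * (z^2 + -1)) = (- e) * (x * (x^2 + -1))] (mod q)"
    using id by simp
  then have 1: "chi (x^2 * x^2 * (z * (z^2 + -1))) = chi ((- e) * (x * (x^2 + -1)))" by (rule chi_cong)
  have x2: "chi (x^2) = 1" using chi_sq assms(3) by simp
  have e: "chi (- e) = 1" using assms(2) chi_neg1 chi_one by auto
  have 2: "chi (x^2 * x^2 * (z * (z^2 + -1))) = chi (z * (z^2 + -1))"
    by (simp only: chi_mult[of "x^2 * x^2"] chi_mult[of "x^2" "x^2"] x2 mult_1 mult_1_right)
  have 3: "chi ((- e) * (x * (x^2 + -1))) = chi (x * (x^2 + -1))"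
    by (simp only: chi_mult[of "- e"] e mult_1)
  show ?thesis unfolding ff_def using 1 2 3 by simp
qed

end

context ell begin

definition H :: int where "H = (q - 1) div 2"

lemma qH: "q = 2 * H + 1" unfolding H_def using q_odd by (simp add: odd_two_times_div_two_succ)

lemma M_le_H: "M \<le> H"
proof -
  have "2 * M \<le> M * M" using M_ge by (intro mult_right_mono) auto
  then show ?thesis using qH qdef by (simp add: power2_eq_square)
qed

lemma M_lt: "M < q - M" using M_le_H qH by simp

definition good :: "int \<Rightarrow> bool" where
  "good x \<longleftrightarrow> x \<in> {1..<q} \<and> \<not> [x^2 = 1] (mod q) \<and> \<not> [x^2 = -1] (mod q)"

lemma sq1: "x \<in> {0..<q} \<Longrightarrow> [x^2 = 1] (mod q) \<longleftrightarrow> x = 1 \<or> x = q - 1"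
  using sqroots[of 1] q_gt by auto

lemma sqm1: "x \<in> {0..<q} \<Longrightarrow> [x^2 = -1] (mod q) \<longleftrightarrow> x = M \<or> x = q - M"
proof -
  assume x: "x \<in> {0..<q}"
  have "[x^2 = -1] (mod q) \<longleftrightarrow> [x^2 = M^2] (mod q)" using Mneg cong_sym cong_trans by meson
  moreover have "M \<in> {1..<q}" using M_lt M_ge by auto
  ultimately show ?thesis using sqroots[of M] x by auto
qed

definition E :: "int set" where "E = {0, 1, q - 1, M, q - M}"

lemma Z_eq: "{x\<in>{0..<q}. good x} = {0..<q} - E"
  unfolding good_def E_def using sq1 sqm1 M_ge M_lt by auto

lemma cardE: "card E = 5"
  unfolding E_def using M_ge M_lt by (simp add: card_insert_if)

lemma E_sub: "E \<subseteq> {0..<q}" unfolding E_def using M_ge M_lt by auto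

lemma card_Z: "int (card {x\<in>{0..<q}. good x}) = q - 5"
proof -
  have "card ({0..<q} - E) = card {0..<q} - card E" using E_sub by (simp add: card_Diff_subset finite_subset)
  moreover have "card E \<le> card {0..<q}" by (rule card_mono) (use E_sub in auto)
  ultimately show ?thesis using Z_eq cardE q_gt by simp
qed

lemma ndM: "\<not> q dvd M" and ndM1: "\<not> q dvd (1 + M)"
  using zdvd_imp_le[of q M] zdvd_imp_le[of q "1 + M"] M_lt M_ge by auto

lemma ffM: "ff M = 1"
proof -
  have "[M * (M^2 + -1) = (M * (1 + M))^2] (mod q)"
    unfolding cong_dvd by (rule dvdI[of _ _ "- M * (M + 1)"]) (simp add: qdef algebra_simps power2_eq_square)
  then have "ff M = chi ((M * (1 + M))^2)" unfolding ff_def by (rule chi_cong)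
  also have "\<dots> = 1" using pr ndM ndM1 by (intro chi_sq) (simp add: prime_dvd_mult_iff)
  finally show ?thesis .
qed

lemma ff0: "ff 0 = 0" and ff1: "ff 1 = 0"
  unfolding ff_def using chi_zero_iff by auto

lemma sumE: "(\<Sum>x\<in>E. ff x) = 2"
proof -
  have "ff (q - 1) = 0" using ff_neg[of 1] ff1 by simp
  moreover have "ff (q - M) = 1" using ff_neg[of M] ffM by simp
  moreover have d: "q - 1 \<noteq> 0" "q - 1 \<noteq> 1" "M \<noteq> 0" "M \<noteq> 1" "M \<noteq> q - 1" "q - M \<noteq> 0"
     "q - M \<noteq> 1" "q - M \<noteq> q - 1" "q - M \<noteq> M" using M_ge M_lt by auto
  ultimately show ?thesis unfolding E_def using ff0 ff1 ffM by simp
qed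

lemma ff_good: "good x \<Longrightarrow> ff x = 1 \<or> ff x = -1"
proof -
  assume g: "good x"
  then have "\<not> q dvd x" using nd_range unfolding good_def by auto
  moreover have "\<not> q dvd (x^2 + -1)" using g unfolding good_def by (simp add: cong_dvd)
  ultimately have "ff x \<noteq> 0" unfolding ff_def using pr chi_zero_iff by (simp add: prime_dvd_mult_iff)
  then show ?thesis using chi_vals unfolding ff_def by auto
qed

lemma good_neg: "good x \<Longrightarrow> good (q - x)"
proof -
  assume g: "good x"
  have "[(q - x)^2 = x^2] (mod q)"
  proof -
    have "[(q - x)^2 = (-x)^2] (mod q)" by (intro cong_pow) (simp add: cong_dvd)
    then show ?thesis by simp
  qed
  note c = this
  have 1: "\<not> [(q - x)^2 = 1] (mod q)"
  proof
    assume "[(q - x)^2 = 1] (mod q)"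
    then have "[x^2 = 1] (mod q)" using c cong_sym cong_trans by meson
    then show False using g unfolding good_def by simp
  qed
  have 2: "\<not> [(q - x)^2 = -1] (mod q)"
  proof
    assume "[(q - x)^2 = -1] (mod q)"
    then have "[x^2 = -1] (mod q)" using c cong_sym cong_trans by meson
    then show False using g unfolding good_def by simp
  qed
  show ?thesis using g 1 2 unfolding good_def by auto
qed

end

context ell begin

lemma inv_ex: assumes "x \<in> {1..<q}" shows "\<exists>z. z \<in> {1..<q} \<and> [x * z = 1] (mod q)"
proof -
  have "coprime x q" using coprime_of nd_range assms by blast
  then obtain z where z: "[x * z = 1] (mod q)" using cong_solve_coprime_int by blast
  have "[x * (z mod q) = x * z] (mod q)" by (intro cong_mult cong_refl xmod)
  then have z': "[x * (z mod q) = 1] (mod q)" using z cong_trans by blast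
  have "z mod q \<noteq> 0"
  proof
    assume "z mod q = 0"
    then have "[0 = 1] (mod q)" using z' by simp
    then show False using q_gt by (simp add: cong_dvd zdvd_not_zless)
  qed
  then have "z mod q \<in> {1..<q}" using mod_range[of z] by auto
  then show ?thesis using z' by blast
qed

definition iv :: "int \<Rightarrow> int" where "iv x = (SOME z. z \<in> {1..<q} \<and> [x * z = 1] (mod q))"

lemma iv: "x \<in> {1..<q} \<Longrightarrow> iv x \<in> {1..<q} \<and> [x * iv x = 1] (mod q)"
  unfolding iv_def using inv_ex by (rule someI_ex)

definition hh :: "int \<Rightarrow> int" where "hh x = (if iv x \<le> H then iv x else q - iv x)"

lemma hh: assumes "x \<in> {1..<q}"
  shows "hh x \<in> {1..H} \<and> ([x * hh x = 1] (mod q) \<or> [x * hh x = -1] (mod q))"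
proof (cases "iv x \<le> H")
  case True
  then show ?thesis using iv[OF assms] unfolding hh_def by auto
next
  case False
  have "[x * (q - iv x) = - (x * iv x)] (mod q)" unfolding cong_dvd
    by (rule dvdI[of _ _ x]) (simp add: algebra_simps)
  moreover have "[- (x * iv x) = -1] (mod q)" using iv[OF assms] by (simp add: cong_minus_minus_iff)
  ultimately have "[x * (q - iv x) = -1] (mod q)" by (rule cong_trans)
  then show ?thesis using False iv[OF assms] qH unfolding hh_def by auto
qed

lemma pm_eq: assumes "x \<in> {1..H}" "w \<in> {1..H}" "q dvd (x - w) \<or> q dvd (x + w)"
  shows "x = w"
proof -
  have "\<not> q dvd (x + w)" using zdvd_imp_le[of q "x + w"] assms(1,2) qH by auto
  then have "q dvd (x - w)" using assms(3) by blast
  moreover have "\<bar>x - w\<bar> < q" using assms(1,2) qH by auto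
  ultimately show ?thesis using small_dvd[of "x - w"] by simp
qed

lemma rel: assumes "[x * z = e1] (mod q)" "[z * w = e2] (mod q)" "e1 = 1 \<or> e1 = -1" "e2 = 1 \<or> e2 = -1"
  shows "q dvd (x - w) \<or> q dvd (x + w)"
proof -
  have a: "q dvd (x * z - e1)" "q dvd (z * w - e2)" using assms(1,2) by (simp_all add: cong_dvd)
  have "x * e2 - e1 * w = (x * z - e1) * w - x * (z * w - e2)" by (simp add: algebra_simps)
  then have d: "q dvd (x * e2 - e1 * w)" using a by (simp add: dvd_diff)
  show ?thesis using assms(3,4)
  proof (elim disjE)
    assume "e1 = 1" "e2 = 1"
    then have "x * e2 - e1 * w = x - w" by simp
    then show ?thesis using d by simp
  next
    assume "e1 = 1" "e2 = -1"
    then have "x * e2 - e1 * w = - (x + w)" by simp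
    then have "q dvd (- (x + w))" using d by simp
    then show ?thesis by (simp only: dvd_minus_iff) simp
  next
    assume "e1 = -1" "e2 = 1"
    then have "x * e2 - e1 * w = x + w" by simp
    then show ?thesis using d by simp
  next
    assume "e1 = -1" "e2 = -1"
    then have "x * e2 - e1 * w = - (x - w)" by simp
    then have "q dvd (- (x - w))" using d by simp
    then show ?thesis by (simp only: dvd_minus_iff) simp
  qed
qed

lemma good_inv: assumes "good x" "[x * z = e] (mod q)" "e = 1 \<or> e = -1" "z \<in> {1..<q}"
  shows "good z"
proof -
  have main: False if "[z^2 = e'] (mod q)" "e' = 1 \<or> e' = -1" for e'
  proof -
    have "q dvd (x*z - e)" "q dvd (z^2 - e')" using assms(2) that(1) by (simp_all add: cong_dvd)
    then have "q dvd ((x*z - e) * (x*z + e))" "q dvd (x^2 * (z^2 - e'))" by simp_all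
    then have "q dvd ((x*z - e) * (x*z + e) - x^2 * (z^2 - e'))" by (rule dvd_diff)
    moreover have "(x*z - e) * (x*z + e) - x^2 * (z^2 - e') = x^2 * e' - 1"
      using assms(3) by (auto simp: algebra_simps power2_eq_square)
    ultimately have "q dvd (x^2 * e' - 1)" by simp
    then have "q dvd (e' * (x^2 * e' - 1))" by simp
    moreover have "e' * (x^2 * e' - 1) = x^2 - e'" using that(2) by (auto simp: algebra_simps)
    ultimately have "[x^2 = e'] (mod q)" by (simp add: cong_dvd)
    then show False using assms(1) that(2) unfolding good_def by auto
  qed
  show ?thesis unfolding good_def using assms(4) main by blast
qed

definition Nn :: "int set" where "Nn = {x\<in>{0..<q}. good x \<and> ff x = -1}"

lemma four_dvd: "4 dvd card Nn"
proof -
  define N1 where "N1 = {x\<in>Nn. x \<le> H}"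
  define N2 where "N2 = {x\<in>Nn. \<not> x \<le> H}"
  have finN: "finite Nn" unfolding Nn_def by (auto intro: finite_subset[of _ "{0..<q}"])
  have "card Nn = card N1 + card N2"
  proof -
    have "Nn = N1 \<union> N2" "N1 \<inter> N2 = {}" unfolding N1_def N2_def by auto
    moreover have "finite N1" "finite N2" using finN unfolding N1_def N2_def by auto
    ultimately show ?thesis by (simp add: card_Un_disjoint)
  qed
  moreover have "card N2 = card N1"
  proof -
    have "(\<lambda>x. q - x) ` N1 = N2"
    proof
      show "(\<lambda>x. q - x) ` N1 \<subseteq> N2"
      proof
        fix y assume "y \<in> (\<lambda>x. q - x) ` N1"
        then obtain x where x: "x \<in> N1" "y = q - x" by blast
        then have "good x" "ff x = -1" "x \<le> H" unfolding N1_def Nn_def by auto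
        then show "y \<in> N2" using x good_neg[of x] ff_neg[of x] qH unfolding N2_def Nn_def good_def by auto
      qed
      show "N2 \<subseteq> (\<lambda>x. q - x) ` N1"
      proof
        fix y assume y: "y \<in> N2"
        then have "good y" "ff y = -1" "\<not> y \<le> H" unfolding N2_def Nn_def by auto
        then have "q - y \<in> N1" using good_neg[of y] ff_neg[of y] qH unfolding N1_def Nn_def good_def by auto
        then show "y \<in> (\<lambda>x. q - x) ` N1" by (rule rev_image_eqI) simp
      qed
    qed
    moreover have "inj_on (\<lambda>x. q - x) N1" by (rule inj_onI) simp
    ultimately show ?thesis using card_image by metis
  qed
  moreover have "even (card N1)"
  proof (rule invol_even[of N1 hh])
    show "finite N1" using finN unfolding N1_def by auto
    show "\<forall>x\<in>N1. hh x \<in> N1 \<and> hh (hh x) = x \<and> hh x \<noteq> x"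
    proof
      fix x assume x: "x \<in> N1"
      then have gx: "good x" and fx: "ff x = -1" and xH: "x \<in> {1..H}"
        unfolding N1_def Nn_def good_def by auto
      have x1: "x \<in> {1..<q}" using gx unfolding good_def by auto
      obtain e1 where z: "hh x \<in> {1..H}" "[x * hh x = e1] (mod q)" "e1 = 1 \<or> e1 = -1"
        using hh[OF x1] by blast
      have z1: "hh x \<in> {1..<q}" using z(1) qH by auto
      have gz: "good (hh x)" by (rule good_inv[OF gx z(2) z(3) z1])
      have fz: "ff (hh x) = -1" using ff_inv[OF z(2) z(3)] nd_range[OF x1] fx by simp
      have inN1: "hh x \<in> N1" using gz fz z(1) z1 unfolding N1_def Nn_def by auto
      obtain e2 where w: "hh (hh x) \<in> {1..H}" "[hh x * hh (hh x) = e2] (mod q)" "e2 = 1 \<or> e2 = -1"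
        using hh[OF z1] by blast
      have "hh (hh x) = x"
        using pm_eq[OF xH w(1) rel[OF z(2) w(2) z(3) w(3)]] by simp
      moreover have "hh x \<noteq> x"
      proof
        assume "hh x = x"
        then have "[x^2 = e1] (mod q)" using z(2) by (simp add: power2_eq_square)
        then show False using gx z(3) unfolding good_def by auto
      qed
      ultimately show "hh x \<in> N1 \<and> hh (hh x) = x \<and> hh x \<noteq> x" using inN1 by simp
    qed
  qed
  moreover obtain k where "card N1 = 2 * k" using \<open>even (card N1)\<close> by (rule evenE)
  ultimately have "card Nn = 4 * k" by simp
  then show ?thesis by simp
qed

end


lemma uniq_aux:
  fixes u v M b :: int
  assumes "u^2 + v^2 = M^2 + 1" "odd u" "even M" "u * M - v = (M^2 + 1) * b"
  shows "u^2 = 1"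
proof -
  have v: "v = u * M - (M^2 + 1) * b" using assms(4) by simp
  have "(M^2 + 1) * ((u - M*b)^2 + b^2 - 1) = u^2 + (u * M - (M^2 + 1) * b)^2 - (M^2 + 1)"
    by (simp add: algebra_simps power2_eq_square)
  also have "\<dots> = 0" using assms(1) v by simp
  finally have e: "(u - M*b)^2 + b^2 = 1"
    by (metis add.commute add_pos_nonneg diff_eq_eq mult_eq_0_iff zero_le_power2 zero_less_one
        eq_iff_diff_eq_0 less_numeral_extra(3))
  show ?thesis
  proof (cases "b = 0")
    case True
    then show ?thesis using e by simp
  next
    case False
    then have "b^2 \<ge> 1" by (simp add: power2_eq_square) (smt (verit) mult_le_cancel_left1 zero_less_mult_iff)
    then have "(u - M*b)^2 = 0" using e zero_le_power2[of "u - M*b"] by linarith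
    then have "u = M * b" by simp
    then show ?thesis using assms(2,3) by simp
  qed
qed

lemma uniq:
  fixes u v M :: int
  assumes "prime (M^2 + 1)" "u^2 + v^2 = M^2 + 1" "odd u" "even M"
  shows "u^2 = 1"
proof -
  have "(u*M - v) * (u*M + v) = (M^2 + 1) * (u^2 - 1)"
    using assms(2) by (simp add: algebra_simps power2_eq_square)
  then have "(M^2 + 1) dvd (u*M - v) * (u*M + v)" by simp
  then have "(M^2 + 1) dvd (u*M - v) \<or> (M^2 + 1) dvd (u*M - (-v))"
    using assms(1) by (simp add: prime_dvd_mult_iff)
  then show ?thesis
  proof
    assume "(M^2 + 1) dvd (u*M - v)"
    then obtain b where "u * M - v = (M^2 + 1) * b" by (elim dvdE)
    then show ?thesis using uniq_aux assms by blast
  next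
    assume "(M^2 + 1) dvd (u*M - (-v))"
    then obtain b where "u * M - (-v) = (M^2 + 1) * b" by (elim dvdE)
    moreover have "u^2 + (-v)^2 = M^2 + 1" using assms(2) by simp
    ultimately show ?thesis using uniq_aux assms(3,4) by blast
  qed
qed

context ell begin

lemma phi_mod8: "8 dvd (phi (-1) - (q - 3))"
proof -
  define Z where "Z = {x\<in>{0..<q}. good x}"
  have "phi (-1) = (\<Sum>x\<in>{0..<q}. ff x)" by (rule phi_ff)
  also have "\<dots> = (\<Sum>x\<in>{0..<q} - E. ff x) + (\<Sum>x\<in>E. ff x)"
    by (rule sum.subset_diff[OF E_sub]) simp
  also have "{0..<q} - E = Z" unfolding Z_def using Z_eq by simp
  finally have p: "phi (-1) = (\<Sum>x\<in>Z. ff x) + 2" using sumE by simp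
  have finZ: "finite Z" unfolding Z_def by (auto intro: finite_subset[of _ "{0..<q}"])
  have NZ: "Nn \<subseteq> Z" unfolding Nn_def Z_def by auto
  have "(\<Sum>x\<in>Z. ff x) = (\<Sum>x\<in>Z - Nn. ff x) + (\<Sum>x\<in>Nn. ff x)"
    by (rule sum.subset_diff[OF NZ finZ])
  also have "(\<Sum>x\<in>Nn. ff x) = - int (card Nn)"
    unfolding Nn_def by simp
  also have "(\<Sum>x\<in>Z - Nn. ff x) = int (card (Z - Nn))"
  proof -
    have "(\<Sum>x\<in>Z - Nn. ff x) = (\<Sum>x\<in>Z - Nn. 1)"
    proof (rule sum.cong[OF refl])
      fix x assume "x \<in> Z - Nn"
      then show "ff x = 1" using ff_good unfolding Z_def Nn_def by auto
    qed
    then show ?thesis by simp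
  qed
  also have "card (Z - Nn) = card Z - card Nn" using NZ finZ by (simp add: card_Diff_subset finite_subset)
  finally have "(\<Sum>x\<in>Z. ff x) = int (card Z) - 2 * int (card Nn)"
    using card_mono[OF finZ NZ] by simp
  moreover have "int (card Z) = q - 5" unfolding Z_def by (rule card_Z)
  moreover obtain k where "card Nn = 4 * k" using four_dvd by (elim dvdE)
  ultimately have "phi (-1) - (q - 3) = 8 * (- int k)" using p by simp
  then show ?thesis by (metis dvd_triv_left)
qed

lemma S_val: "phi (-1) = -2"
proof -
  obtain T where T: "(phi (-1))^2 + T^2 = 4 * q" using two_squares by blast
  obtain j where j: "phi (-1) - (q - 3) = 8 * j" using phi_mod8 by (elim dvdE)
  obtain l where l: "q = 16 * l + 1" using q16 by (metis mod_div_mult_eq add.commute mult.commute)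
  define u where "u = 4 * (j + 2 * l) - 1"
  have S: "phi (-1) = 2 * u" using j l unfolding u_def by simp
  have "T^2 = 4 * (q - u^2)" using T S by (simp add: power2_eq_square algebra_simps)
  then have "even (T^2)" by simp
  then have "even T" by simp
  then obtain v where v: "T = 2 * v" by (elim evenE)
  have "4 * (u^2 + v^2) = 4 * q" using T S v by (simp add: power2_eq_square algebra_simps)
  then have uv: "u^2 + v^2 = M^2 + 1" using qdef by simp
  have "odd u" unfolding u_def by simp
  moreover have "even M" using M4 by (metis dvd_trans even_numeral)
  moreover have "prime (M^2 + 1)" using pr qdef by simp
  ultimately have "u^2 = 1" using uniq uv by blast
  then have "u = 1 \<or> u = -1" by (metis power2_eq_1_iff)
  moreover have "u \<noteq> 1" unfolding u_def by presburger
  ultimately have "u = -1" by simp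
  then show ?thesis using S by simp
qed

end


context ell begin

lemma card_aff: "int (card (wpoints_affine q (-1) 0)) = q - 2"
proof -
  let ?B = "\<lambda>x. {y\<in>{0..<q}. [y^2 = x * (x^2 + -1)] (mod q)}"
  have eq: "wpoints_affine q (-1) 0 = Sigma {0..<q} ?B"
  proof -
    have "x^3 + -1 * x + 0 = x * (x^2 + -1)" for x :: int by (simp add: power2_eq_square power3_eq_cube algebra_simps)
    then show ?thesis unfolding wpoints_affine_def by (auto simp: cong_def)
  qed
  have "card (Sigma {0..<q} ?B) = (\<Sum>x\<in>{0..<q}. card (?B x))"
    by (rule card_SigmaI) (auto intro: finite_subset[of _ "{0..<q}"])
  then have "int (card (wpoints_affine q (-1) 0)) = (\<Sum>x\<in>{0..<q}. int (card (?B x)))"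
    using eq by simp
  also have "\<dots> = (\<Sum>x\<in>{0..<q}. 1 + chi (x * (x^2 + -1)))" by (simp only: roots)
  also have "\<dots> = q + phi (-1)" unfolding phi_def using q_gt by (simp add: sum.distrib)
  finally show ?thesis using S_val by simp
qed

end

theorem corollary3:
  fixes p n :: nat
  assumes "p > 0" and "n > 0"
    and "prime (int (p ^ 2 * 16 ^ n + 1))"
  shows "wcard (int (p ^ 2 * 16 ^ n + 1)) (-1) 0 = p ^ 2 * 16 ^ n"
proof -
  define M where "M = int (p * 4 ^ n)"
  have q: "int (p ^ 2 * 16 ^ n + 1) = M^2 + 1"
  proof -
    have e: "(16::nat) ^ n = 4 ^ n * 4 ^ n" by (simp flip: power_mult_distrib)
    show ?thesis unfolding M_def by (simp add: power2_eq_square e)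
  qed
  have Mpos: "M > 0" using assms(1) unfolding M_def by simp
  have M4: "4 dvd M"
  proof -
    obtain m where "n = Suc m" using assms(2) by (cases n) auto
    then have "M = 4 * int (p * 4 ^ m)" unfolding M_def by simp
    then show ?thesis by simp
  qed
  interpret ell "int (p ^ 2 * 16 ^ n + 1)" M
    apply unfold_locales
    using assms(3) q Mpos M4 by simp_all
  define C where "C = card (wpoints_affine (int (p ^ 2 * 16 ^ n + 1)) (-1) 0)"
  define Q where "Q = p ^ 2 * 16 ^ n"
  have "int C = int (p ^ 2 * 16 ^ n + 1) - 2" unfolding C_def by (rule card_aff)
  then have "int C = int Q - 1" unfolding Q_def by simp
  then have "C + 1 = Q" by linarith
  then show ?thesis unfolding wcard_def C_def Q_def by simp
qed

end
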